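(* Let $b_{10}>0$, $b_{11}\ge0$, $c_{01}\ge0$, $c_{11}\ge0$, and define $\gamma'=\frac{c_{01}}{b_{10}}$, $\delta'=\frac{b_{10}-b_{11}+c_{11}-c_{01}}{b_{10}}$. Let $\mathcal{F}=\{(P_{11},t): P_{11}\in[0,1],\ P_{11}-1\le t\le P_{11}\}$ and $\mathcal{P}=\{(P_{11},t)\in\mathcal{F}: t>\gamma'+\delta'P_{11}\}$. Then $\mathcal{P}\neq\emptyset$ if and only if $c_{11}<b_{11}$.
   Context: Double binary causal classification: $P_{11}$ is the probability of the positive outcome under the positive treatment, $t=P_{11}-P_{10}$ the estimated individual treatment effect, $b_{ij}$ the benefit of outcome $i$ under treatment $j$ and $c_{ij}$ the cost of outcome $i$ under treatment $j$, normalized so that $c_{00}=c_{10}=0$, $b_{00}=b_{01}=0$. The cost-sensitive causal decision boundary (equality of expected profits of the two treatments) is then $t=\gamma'+\delta'P_{11}$, and $\mathcal{P}$ is the positive treatment set. *)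

theory Defs
  imports Complex_Main
begin

definition gamma' :: "real \<Rightarrow> real \<Rightarrow> real" where
  "gamma' b10 c01 = c01 / b10"

definition delta' :: "real \<Rightarrow> real \<Rightarrow> real \<Rightarrow> real \<Rightarrow> real" where
  "delta' b10 b11 c01 c11 = (b10 - b11 + c11 - c01) / b10"

definition feasible_region :: "(real \<times> real) set" where
  "feasible_region = {(p, t). 0 \<le> p \<and> p \<le> 1 \<and> p - 1 \<le> t \<and> t \<le> p}"

definition pos_treatment_set :: "real \<Rightarrow> real \<Rightarrow> real \<Rightarrow> real \<Rightarrow> (real \<times> real) set" where
  "pos_treatment_set b10 b11 c01 c11 =
     {(p, t) \<in> feasible_region. t > gamma' b10 c01 + delta' b10 b11 c01 c11 * p}"

end

theory Submission
  imports Defs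
begin

theorem theorem2:
  fixes b10 b11 c01 c11 :: real
  assumes "b10 > 0" and "b11 \<ge> 0" and "c01 \<ge> 0" and "c11 \<ge> 0"
  shows "pos_treatment_set b10 b11 c01 c11 \<noteq> {} \<longleftrightarrow> c11 < b11"
proof
  assume "pos_treatment_set b10 b11 c01 c11 \<noteq> {}"
  then obtain p t where p0: "0 \<le> p" and p1: "p \<le> 1" and tp: "t \<le> p"
    and h: "t > c01 / b10 + (b10 - b11 + c11 - c01) / b10 * p"
    unfolding pos_treatment_set_def feasible_region_def gamma'_def delta'_def by auto
  have "b10 * t > c01 + (b10 - b11 + c11 - c01) * p"
    using h assms(1) by (simp add: field_simps)
  moreover have "b10 * t \<le> b10 * p" using tp assms(1) by simp
  moreover have "c01 * (1 - p) \<ge> 0" using assms(3) p1 by simp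
  ultimately have "(b11 - c11) * p > 0" by (simp add: algebra_simps)
  then show "c11 < b11" using p0
    by (metis diff_gt_0_iff_gt mult_nonpos_nonneg not_less not_le)
next
  assume "c11 < b11"
  have "(1,1) \<in> pos_treatment_set b10 b11 c01 c11"
    unfolding pos_treatment_set_def feasible_region_def gamma'_def delta'_def
    using assms \<open>c11 < b11\<close> by (simp add: field_simps)
  then show "pos_treatment_set b10 b11 c01 c11 \<noteq> {}" by auto
qed

end
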